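(* Let $\Omega$ be a finite set of $n$ items, let $k,l\ge 1$ be integers, and let $f_1,\dots,f_m:2^\Omega\to\mathbb{R}_{\ge 0}$ be submodular (not necessarily monotone) functions. Then the algorithm $\textsf{Sampling-Greedy}$ returns a random set $S\subseteq\Omega$ with $|S|\le l$ such that $$\mathbb{E}_S[F(S)]\;\ge\;\frac{1}{2e}\,F(O),$$ where $O\in\arg\max_{S'\subseteq\Omega,\ |S'|\le l}F(S')$.
   Context: Define $F(S)=\sum_{i=1}^m\max_{A\subseteq S,\ |A|\le k} f_i(A)$. Submodularity of $f_i$: $f_i(A\cup\{x\})-f_i(A)\ge f_i(A'\cup\{x\})-f_i(A')$ for $A\subseteq A'$, $x\notin A'$. Notation: add a set $\Phi$ of $l$ dummy items and let $\Omega'=\Omega\cup\Phi$; extend each $f_i$ by $f_i(A)=f_i(A\cap\Omega)$ for $A\subseteq\Omega'$. Let $\Delta_i(x,A)=f_i(A\cup\{x\})-f_i(A)$; for $y\in A$, $\nabla_i(x,y,A)=f_i((A\setminus\{y\})\cup\{x\})-f_i(A)$; for $|A|\le k$: $\nabla_i(x,A)=0$ if $x\in A$; $\nabla_i(x,A)=\max\{0,\max_{y\in A}\nabla_i(x,y,A),\Delta_i(x,A)\}$ if $x\notin A$, $|A|<k$; $\nabla_i(x,A)=\max\{0,\max_{y\in A}\nabla_i(x,y,A)\}$ if $x\notin A$, $|A|=k$. Define $\textsf{Rep}_i(x,A)$ to be $\emptyset$ if $\nabla_i(x,A)=0$, or if $\nabla_i(x,A)>0$, $|A|<k$ and $\max_{y\in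 A}\nabla_i(x,y,A)<\Delta_i(x,A)$; otherwise (i.e. $\nabla_i(x,A)>0$ and either $|A|=k$, or $|A|<k$ and $\max_{y\in A}\nabla_i(x,y,A)\ge\Delta_i(x,A)$) it is $\{y^*\}$ for some $y^*\in\arg\max_{y\in A}\nabla_i(x,y,A)$. $\textsf{Trim}(B,f_i)$: start with $A\leftarrow B$, go once through the elements of $B$ in a fixed order and remove an element $x$ currently in $A$ whenever $f_i(A)-f_i(A\setminus\{x\})<0$; return $A$. $\textsf{Sampling-Greedy}$: initialize $S\leftarrow\emptyset$ and $T_i\leftarrow\emptyset$ for all $i\in[m]$. Repeat $l$ times: let $M$ be a set of exactly $l$ items of $\Omega'$ maximizing $\sum_{x\in M}\sum_{i=1}^m\nabla_i(x,T_i)$; pick $x^*$ uniformly at random from $M$ and set $S\leftarrow S\cup\{x^*\}$; for each $i\in[m]$ with $\nabla_i(x^*,T_i)>0$, set $T_i\leftarrow (T_i\setminus\textsf{Rep}_i(x^*,T_i))\cup\{x^*\}$ and then $T_i\leftarrow\textsf{Trim}(T_i,f_i)$. Finally output $S$ with dummy items removed (i.e. $S\cap\Omega$). *)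

theory Defs
  imports "HOL-Probability.Probability"
begin

text \<open>Objective: F(S) = sum over i < m of max over A subseteq S, |A| <= k of f i A.
  (Indices 0..m-1 stand for 1..m.)\<close>
definition Fobj :: "(nat \<Rightarrow> 'a set \<Rightarrow> real) \<Rightarrow> nat \<Rightarrow> nat \<Rightarrow> 'a set \<Rightarrow> real" where
  "Fobj f m k S = (\<Sum>i<m. Max {f i A | A. A \<subseteq> S \<and> card A \<le> k})"

definition submodular_on :: "'a set \<Rightarrow> ('a set \<Rightarrow> real) \<Rightarrow> bool" where
  "submodular_on \<Omega> g \<longleftrightarrow> (\<forall>A A' x. A \<subseteq> A' \<and> A' \<subseteq> \<Omega> \<and> x \<in> \<Omega> \<and> x \<notin> A' \<longrightarrow>
      g (insert x A) - g A \<ge> g (insert x A') - g A')"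

text \<open>Items of the extended ground set: Inl a for real items, Inr j (j < l) for the l dummy items.\<close>
definition ext_ground :: "'a set \<Rightarrow> nat \<Rightarrow> ('a + nat) set" where
  "ext_ground \<Omega> l = Inl ` \<Omega> \<union> Inr ` {..<l}"

definition ext_fun :: "('a set \<Rightarrow> real) \<Rightarrow> ('a + nat) set \<Rightarrow> real" where
  "ext_fun g A = g (Inl -` A)"

definition Delta :: "('b set \<Rightarrow> real) \<Rightarrow> 'b \<Rightarrow> 'b set \<Rightarrow> real" where
  "Delta g x A = g (insert x A) - g A"

definition Nab2 :: "('b set \<Rightarrow> real) \<Rightarrow> 'b \<Rightarrow> 'b \<Rightarrow> 'b set \<Rightarrow> real" where
  "Nab2 g x y A = g (insert x (A - {y})) - g A"

definition Nab :: "('b set \<Rightarrow> real) \<Rightarrow> nat \<Rightarrow> 'b \<Rightarrow> 'b set \<Rightarrow> real" where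
  "Nab g k x A =
     (if x \<in> A then 0
      else if card A < k then Max ({0, Delta g x A} \<union> (\<lambda>y. Nab2 g x y A) ` A)
      else Max ({0} \<union> (\<lambda>y. Nab2 g x y A) ` A))"

text \<open>Rep; the argmax element y* is supplied by the tie-breaking function ch.\<close>
definition Rep :: "('b set \<Rightarrow> real) \<Rightarrow> nat \<Rightarrow> ('b \<Rightarrow> 'b set \<Rightarrow> 'b) \<Rightarrow> 'b \<Rightarrow> 'b set \<Rightarrow> 'b set" where
  "Rep g k ch x A =
     (if Nab g k x A = 0 then {}
      else if card A < k \<and> (A = {} \<or> Max ((\<lambda>y. Nab2 g x y A) ` A) < Delta g x A) then {}
      else {ch x A})"

definition valid_argmax_choice :: "('b set \<Rightarrow> real) \<Rightarrow> ('b \<Rightarrow> 'b set \<Rightarrow> 'b) \<Rightarrow> bool" where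
  "valid_argmax_choice g ch \<longleftrightarrow> (\<forall>x A. finite A \<and> A \<noteq> {} \<longrightarrow>
      ch x A \<in> A \<and> (\<forall>y\<in>A. Nab2 g x y A \<le> Nab2 g x (ch x A) A))"

definition Trim :: "('b set \<Rightarrow> real) \<Rightarrow> 'b list \<Rightarrow> 'b set \<Rightarrow> 'b set" where
  "Trim g ord B = foldl (\<lambda>A x. if x \<in> B \<and> x \<in> A \<and> g A - g (A - {x}) < 0 then A - {x} else A) B ord"

definition score :: "(nat \<Rightarrow> 'a set \<Rightarrow> real) \<Rightarrow> nat \<Rightarrow> nat \<Rightarrow> (nat \<Rightarrow> ('a + nat) set) \<Rightarrow> ('a + nat) set \<Rightarrow> real" where
  "score f m k T M = (\<Sum>x\<in>M. \<Sum>i<m. Nab (ext_fun (f i)) k x (T i))"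

definition valid_selM :: "(nat \<Rightarrow> 'a set \<Rightarrow> real) \<Rightarrow> nat \<Rightarrow> nat \<Rightarrow> nat \<Rightarrow> 'a set \<Rightarrow>
    (('a + nat) set \<Rightarrow> (nat \<Rightarrow> ('a + nat) set) \<Rightarrow> ('a + nat) set) \<Rightarrow> bool" where
  "valid_selM f m k l \<Omega> selM \<longleftrightarrow> (\<forall>S T.
     selM S T \<subseteq> ext_ground \<Omega> l \<and> card (selM S T) = l \<and>
     (\<forall>M'. M' \<subseteq> ext_ground \<Omega> l \<and> card M' = l \<longrightarrow> score f m k T M' \<le> score f m k T (selM S T)))"

definition sg_update :: "(nat \<Rightarrow> 'a set \<Rightarrow> real) \<Rightarrow> nat \<Rightarrow> nat \<Rightarrow>
    (nat \<Rightarrow> ('a + nat) \<Rightarrow> ('a + nat) set \<Rightarrow> ('a + nat)) \<Rightarrow> ('a + nat) list \<Rightarrow>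
    ('a + nat) \<Rightarrow> ('a + nat) set \<times> (nat \<Rightarrow> ('a + nat) set) \<Rightarrow> ('a + nat) set \<times> (nat \<Rightarrow> ('a + nat) set)" where
  "sg_update f m k ch ord x st =
     (insert x (fst st),
      (\<lambda>i. if i < m \<and> Nab (ext_fun (f i)) k x (snd st i) > 0
           then Trim (ext_fun (f i)) ord
                  (insert x (snd st i - Rep (ext_fun (f i)) k (ch i) x (snd st i)))
           else snd st i))"

definition sg_step :: "(nat \<Rightarrow> 'a set \<Rightarrow> real) \<Rightarrow> nat \<Rightarrow> nat \<Rightarrow>
    (('a + nat) set \<Rightarrow> (nat \<Rightarrow> ('a + nat) set) \<Rightarrow> ('a + nat) set) \<Rightarrow>
    (nat \<Rightarrow> ('a + nat) \<Rightarrow> ('a + nat) set \<Rightarrow> ('a + nat)) \<Rightarrow> ('a + nat) list \<Rightarrow>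
    ('a + nat) set \<times> (nat \<Rightarrow> ('a + nat) set) \<Rightarrow> (('a + nat) set \<times> (nat \<Rightarrow> ('a + nat) set)) pmf" where
  "sg_step f m k selM ch ord st =
     map_pmf (\<lambda>x. sg_update f m k ch ord x st) (pmf_of_set (selM (fst st) (snd st)))"

definition sampling_greedy :: "(nat \<Rightarrow> 'a set \<Rightarrow> real) \<Rightarrow> nat \<Rightarrow> nat \<Rightarrow> nat \<Rightarrow>
    (('a + nat) set \<Rightarrow> (nat \<Rightarrow> ('a + nat) set) \<Rightarrow> ('a + nat) set) \<Rightarrow>
    (nat \<Rightarrow> ('a + nat) \<Rightarrow> ('a + nat) set \<Rightarrow> ('a + nat)) \<Rightarrow> ('a + nat) list \<Rightarrow> 'a set pmf" where
  "sampling_greedy f m k l selM ch ord =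
     map_pmf (\<lambda>st. Inl -` fst st)
       (((\<lambda>p. bind_pmf p (sg_step f m k selM ch ord)) ^^ l) (return_pmf ({}, (\<lambda>_. {}))))"

end

theory Submission
  imports Defs
begin


lemma sub_app:
  "submodular_on U g \<Longrightarrow> A \<subseteq> A' \<Longrightarrow> A' \<subseteq> U \<Longrightarrow> x \<in> U \<Longrightarrow> x \<notin> A' \<Longrightarrow>
   g (insert x A) - g A \<ge> g (insert x A') - g A'"
  unfolding submodular_on_def by blast

lemma ext_sub:
  assumes "submodular_on \<Omega> f"
  shows "submodular_on (ext_ground \<Omega> l) (ext_fun f)"
  unfolding submodular_on_def
proof (intro allI impI, elim conjE)
  fix A A' x assume h: "A \<subseteq> A'" "A' \<subseteq> ext_ground \<Omega> l" "x \<in> ext_ground \<Omega> l" "x \<notin> A'"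
  show "ext_fun f (insert x A) - ext_fun f A \<ge> ext_fun f (insert x A') - ext_fun f A'"
  proof (cases x)
    case (Inl a)
    have a: "a \<in> \<Omega>" using h(3) Inl by (auto simp: ext_ground_def)
    have h1: "Inl -` A' \<subseteq> \<Omega>" using h(2) by (auto simp: ext_ground_def)
    have h2: "a \<notin> Inl -` A'" using h(4) Inl by auto
    have h3: "Inl -` A \<subseteq> Inl -` A'" using h(1) by auto
    have "f (insert a (Inl -` A)) - f (Inl -` A) \<ge> f (insert a (Inl -` A')) - f (Inl -` A')"
      by (rule sub_app[OF assms h3 h1 a h2])
    moreover have "\<And>B. Inl -` insert x B = insert a (Inl -` B)" using Inl by auto
    ultimately show ?thesis by (simp add: ext_fun_def)
  next
    case (Inr j)
    have "\<And>B. Inl -` insert x B = (Inl -` B :: 'a set)" using Inr by auto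
    then show ?thesis by (simp add: ext_fun_def)
  qed
qed

lemma marg_mono:
  assumes "submodular_on U g" "A \<subseteq> B" "B \<subseteq> U" "y \<in> A"
  shows "g A - g (A - {y}) \<ge> g B - g (B - {y})"
proof -
  have "g (insert y (A - {y})) - g (A - {y}) \<ge> g (insert y (B - {y})) - g (B - {y})"
  proof -
    have "A - {y} \<subseteq> B - {y}" "B - {y} \<subseteq> U" "y \<in> U" "y \<notin> B - {y}" using assms by auto
    then show ?thesis by (rule sub_app[OF assms(1)])
  qed
  moreover have "insert y (A - {y}) = A" "insert y (B - {y}) = B" using assms by auto
  ultimately show ?thesis by simp
qed

lemma sum_marg_union:
  assumes "submodular_on U g" "finite Q" "Q \<subseteq> U" "T \<subseteq> U"
  shows "g (Q \<union> T) - g T \<le> (\<Sum>q\<in>Q - T. g (insert q T) - g T)"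
  using assms(2,3)
proof (induction Q rule: finite_induct)
  case empty then show ?case by simp
next
  case (insert a Q)
  show ?case
  proof (cases "a \<in> T")
    case True
    then have "insert a Q \<union> T = Q \<union> T" "insert a Q - T = Q - T" by auto
    then show ?thesis using insert by simp
  next
    case False
    have "g (insert a (Q \<union> T)) - g (Q \<union> T) \<le> g (insert a T) - g T"
    proof -
      have "T \<subseteq> Q \<union> T" "Q \<union> T \<subseteq> U" "a \<in> U" "a \<notin> Q \<union> T"
        using insert.prems assms(4) False insert.hyps(2) by auto
      then show ?thesis by (rule sub_app[OF assms(1)])
    qed
    moreover have "insert a Q - T = insert a (Q - T)" "a \<notin> Q - T" using False insert.hyps by auto
    moreover have "insert a Q \<union> T = insert a (Q \<union> T)" by auto
    ultimately show ?thesis using insert by (simp add: insert.hyps(1))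
  qed
qed

lemma sum_last_marg:
  assumes "submodular_on U g" "finite T" "T \<subseteq> U"
  shows "(\<Sum>y\<in>T. g T - g (T - {y})) \<le> g T - g {}"
  using assms(2,3)
proof (induction T rule: finite_induct)
  case empty then show ?case by simp
next
  case (insert a T)
  have "(\<Sum>y\<in>T. g (insert a T) - g (insert a T - {y})) \<le> (\<Sum>y\<in>T. g T - g (T - {y}))"
  proof (rule sum_mono)
    fix y assume "y \<in> T"
    then show "g (insert a T) - g (insert a T - {y}) \<le> g T - g (T - {y})"
      using marg_mono[OF assms(1), of T "insert a T" y] insert by auto
  qed
  moreover have "insert a T - {a} = T" using insert by auto
  ultimately show ?case using insert by (simp add: sum.insert)
qed

lemma Nab_lt: "x \<notin> A \<Longrightarrow> card A < k \<Longrightarrow> Nab g k x A = Max ({0, Delta g x A} \<union> (\<lambda>y. Nab2 g x y A) ` A)"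
  by (simp add: Nab_def)

lemma Nab_ge': "x \<notin> A \<Longrightarrow> \<not> card A < k \<Longrightarrow> Nab g k x A = Max ({0} \<union> (\<lambda>y. Nab2 g x y A) ` A)"
  by (simp add: Nab_def)

lemma Nab_nonneg: "finite A \<Longrightarrow> Nab g k x A \<ge> 0"
proof -
  assume f: "finite A"
  show ?thesis
  proof (cases "x \<in> A")
    case True then show ?thesis by (simp add: Nab_def)
  next
    case False
    show ?thesis
    proof (cases "card A < k")
      case True
      have "(0::real) \<le> Max ({0, Delta g x A} \<union> (\<lambda>y. Nab2 g x y A) ` A)" using f by (intro Max_ge) auto
      then show ?thesis using Nab_lt[OF False True] by simp
    next
      case c: False
      have "(0::real) \<le> Max ({0} \<union> (\<lambda>y. Nab2 g x y A) ` A)" using f by (intro Max_ge) auto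
      then show ?thesis using Nab_ge'[OF False c] by simp
    qed
  qed
qed

lemma Nab_ge_Nab2: "finite A \<Longrightarrow> x \<notin> A \<Longrightarrow> y \<in> A \<Longrightarrow> Nab g k x A \<ge> Nab2 g x y A"
proof -
  assume f: "finite A" and x: "x \<notin> A" and y: "y \<in> A"
  show ?thesis
  proof (cases "card A < k")
    case True
    have "Nab2 g x y A \<le> Max ({0, Delta g x A} \<union> (\<lambda>y. Nab2 g x y A) ` A)" using f y by (intro Max_ge) auto
    then show ?thesis using Nab_lt[OF x True] by simp
  next
    case c: False
    have "Nab2 g x y A \<le> Max ({0} \<union> (\<lambda>y. Nab2 g x y A) ` A)" using f y by (intro Max_ge) auto
    then show ?thesis using Nab_ge'[OF x c] by simp
  qed
qed

lemma Nab_ge_Delta: "finite A \<Longrightarrow> x \<notin> A \<Longrightarrow> card A < k \<Longrightarrow> Nab g k x A \<ge> Delta g x A"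
proof -
  assume f: "finite A" and x: "x \<notin> A" and c: "card A < k"
  have "Delta g x A \<le> Max ({0, Delta g x A} \<union> (\<lambda>y. Nab2 g x y A) ` A)" using f by (intro Max_ge) auto
  then show ?thesis using Nab_lt[OF x c] by simp
qed

lemma Nab2_ge:
  assumes "submodular_on U g" "T \<subseteq> U" "q \<in> U" "q \<notin> T" "y \<in> T"
  shows "Nab2 g q y T \<ge> Delta g q T - (g T - g (T - {y}))"
proof -
  have "T - {y} \<subseteq> T" by auto
  then have "g (insert q (T - {y})) - g (T - {y}) \<ge> g (insert q T) - g T"
    by (rule sub_app[OF assms(1) _ assms(2,3,4)])
  then show ?thesis unfolding Nab2_def Delta_def by simp
qed


lemma key_exchange:
  assumes sub: "submodular_on U g" and fT: "finite T" "T \<subseteq> U" "card T \<le> k"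
    and fQ: "finite Q" "Q \<subseteq> U" "card Q \<le> k"
    and nn: "\<And>A. A \<subseteq> U \<Longrightarrow> g A \<ge> 0"
    and tr: "\<And>y. y \<in> T \<Longrightarrow> g T - g (T - {y}) \<ge> 0"
  shows "(\<Sum>q\<in>Q. Nab g k q T) \<ge> g (Q \<union> T) - 2 * g T"
proof -
  have s1: "(\<Sum>q\<in>Q. Nab g k q T) \<ge> (\<Sum>q\<in>Q - T. Nab g k q T)"
    by (rule sum_mono2) (use fQ fT Nab_nonneg in auto)
  have um: "g (Q \<union> T) - g T \<le> (\<Sum>q\<in>Q - T. Delta g q T)"
    using sum_marg_union[OF sub fQ(1,2) fT(2)] by (simp add: Delta_def)
  have gT: "g T \<ge> 0" "g {} \<ge> 0" using nn fT by auto
  show ?thesis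
  proof (cases "card T < k")
    case True
    have "(\<Sum>q\<in>Q - T. Nab g k q T) \<ge> (\<Sum>q\<in>Q - T. Delta g q T)"
      by (rule sum_mono) (use Nab_ge_Delta fT True in auto)
    then show ?thesis using s1 um gT by linarith
  next
    case False
    then have ck: "card T = k" using fT by auto
    have c1: "card (Q - T) = card Q - card (Q \<inter> T)" using fQ by (simp add: card_Diff_subset_Int)
    have c2: "card (T - Q) = card T - card (T \<inter> Q)" using fT by (simp add: card_Diff_subset_Int)
    have "card (Q \<inter> T) = card (T \<inter> Q)" by (simp add: Int_commute)
    then have "card (Q - T) \<le> card (T - Q)" using c1 c2 ck fQ(3) by linarith
    then obtain \<pi> where pi: "\<pi> ` (Q - T) \<subseteq> T - Q" "inj_on \<pi> (Q - T)"
      using card_le_inj[of "Q - T" "T - Q"] fQ fT by auto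
    define mg where "mg y = g T - g (T - {y})" for y
    have "(\<Sum>q\<in>Q - T. Nab g k q T) \<ge> (\<Sum>q\<in>Q - T. Delta g q T - mg (\<pi> q))"
    proof (rule sum_mono)
      fix q assume q: "q \<in> Q - T"
      then have pq: "\<pi> q \<in> T" using pi by auto
      have "Nab g k q T \<ge> Nab2 g q (\<pi> q) T" using Nab_ge_Nab2 fT q pq by auto
      moreover have "Nab2 g q (\<pi> q) T \<ge> Delta g q T - mg (\<pi> q)"
        unfolding mg_def using Nab2_ge[OF sub fT(2) _ _ pq, of q] q fQ by auto
      ultimately show "Delta g q T - mg (\<pi> q) \<le> Nab g k q T" by linarith
    qed
    moreover have "(\<Sum>q\<in>Q - T. mg (\<pi> q)) = (\<Sum>y\<in>\<pi> ` (Q - T). mg y)"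
      using sum.reindex[OF pi(2), of mg] by simp
    moreover have "(\<Sum>y\<in>\<pi> ` (Q - T). mg y) \<le> (\<Sum>y\<in>T. mg y)"
      by (rule sum_mono2) (use fT pi tr mg_def in auto)
    moreover have "(\<Sum>y\<in>T. mg y) \<le> g T - g {}"
      unfolding mg_def using sum_last_marg[OF sub fT(1,2)] .
    moreover have "(\<Sum>q\<in>Q - T. Delta g q T - mg (\<pi> q)) = (\<Sum>q\<in>Q - T. Delta g q T) - (\<Sum>q\<in>Q - T. mg (\<pi> q))"
      by (simp add: sum_subtractf)
    ultimately show ?thesis using s1 um gT by linarith
  qed
qed


lemma Max_le_real: "finite S \<Longrightarrow> S \<noteq> {} \<Longrightarrow> (\<And>s. s \<in> S \<Longrightarrow> s \<le> (c::real)) \<Longrightarrow> Max S \<le> c"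
  by (simp add: Max_le_iff)

lemma Rep_gain:
  assumes fT: "finite T" and pos: "Nab g k x T > 0" and ch: "valid_argmax_choice g ch"
    and k: "k \<ge> 1" and cT: "card T \<le> k"
  shows "g (insert x (T - Rep g k ch x T)) = g T + Nab g k x T
         \<and> card (insert x (T - Rep g k ch x T)) \<le> k \<and> x \<notin> T"
proof -
  have xT: "x \<notin> T" using pos by (auto simp: Nab_def)
  define N where "N y = Nab2 g x y T" for y
  show ?thesis
  proof (cases "card T < k \<and> (T = {} \<or> Max ((\<lambda>y. Nab2 g x y T) ` T) < Delta g x T)")
    case True
    then have R: "Rep g k ch x T = {}" using pos by (simp add: Rep_def)
    have "Nab g k x T \<le> max 0 (Delta g x T)"
    proof -
      have "\<And>y. y \<in> T \<Longrightarrow> Nab2 g x y T < Delta g x T"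
        using True fT by (metis Max_ge finite_imageI image_eqI le_less_trans empty_iff)
      then have "Max ({0, Delta g x T} \<union> (\<lambda>y. Nab2 g x y T) ` T) \<le> max 0 (Delta g x T)"
        using fT by (intro Max_le_real) (auto simp: le_max_iff_disj intro: less_imp_le)
      then show ?thesis using Nab_lt[OF xT] True by simp
    qed
    moreover have "Nab g k x T \<ge> Delta g x T" using True Nab_ge_Delta[OF fT xT] by simp
    ultimately have "Nab g k x T = Delta g x T" using pos by (auto simp: max_def split: if_splits)
    then show ?thesis using R True xT fT by (simp add: Delta_def)
  next
    case False
    then have R: "Rep g k ch x T = {ch x T}" using pos by (simp add: Rep_def)
    have Tne: "T \<noteq> {}" using False k cT by auto
    have y: "ch x T \<in> T" "\<And>z. z \<in> T \<Longrightarrow> N z \<le> N (ch x T)"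
      using ch fT Tne unfolding valid_argmax_choice_def N_def by blast+
    have MaxN: "Max ((\<lambda>y. Nab2 g x y T) ` T) = N (ch x T)"
      unfolding N_def[symmetric] using y fT by (intro Max_eqI) auto
    have "Nab g k x T \<le> max 0 (N (ch x T))"
    proof (cases "card T < k")
      case True
      then have "Delta g x T \<le> N (ch x T)" using False Tne MaxN by auto
      then have "Max ({0, Delta g x T} \<union> (\<lambda>y. Nab2 g x y T) ` T) \<le> max 0 (N (ch x T))"
        using fT y unfolding N_def by (intro Max_le_real) (auto simp: le_max_iff_disj)
      then show ?thesis using Nab_lt[OF xT True] by simp
    next
      case c: False
      have "Max ({0} \<union> (\<lambda>y. Nab2 g x y T) ` T) \<le> max 0 (N (ch x T))"
        using fT y unfolding N_def by (intro Max_le_real) (auto simp: le_max_iff_disj)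
      then show ?thesis using Nab_ge'[OF xT c] by simp
    qed
    moreover have "Nab g k x T \<ge> N (ch x T)" using Nab_ge_Nab2[OF fT xT y(1)] unfolding N_def .
    ultimately have eq: "Nab g k x T = N (ch x T)" using pos by (auto simp: max_def split: if_splits)
    have "card T > 0" using fT y(1) card_gt_0_iff by blast
    then have "card (insert x (T - {ch x T})) = card T" using fT xT y by (simp add: card_Suc_Diff1)
    then show ?thesis using R eq xT cT by (simp add: N_def Nab2_def)
  qed
qed

definition trstep :: "('b set \<Rightarrow> real) \<Rightarrow> 'b set \<Rightarrow> 'b set \<Rightarrow> 'b \<Rightarrow> 'b set" where
  "trstep g B = (\<lambda>A x. if x \<in> B \<and> x \<in> A \<and> g A - g (A - {x}) < 0 then A - {x} else A)"

lemma Trim_eq: "Trim g ord B = foldl (trstep g B) B ord"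
  by (simp add: Trim_def trstep_def)

lemma fold_sub: "A \<subseteq> B \<Longrightarrow> foldl (trstep g B) A xs \<subseteq> A"
proof (induction xs arbitrary: A)
  case Nil then show ?case by simp
next
  case (Cons a xs)
  have "trstep g B A a \<subseteq> A" by (auto simp: trstep_def)
  then show ?case using Cons by (metis foldl_Cons order.trans)
qed

lemma fold_val: fixes g :: "'b set \<Rightarrow> real" shows "g (foldl (trstep g B) A xs) \<ge> g A"
proof (induction xs arbitrary: A)
  case Nil then show ?case by simp
next
  case (Cons a xs)
  have "g (trstep g B A a) \<ge> g A" by (auto simp: trstep_def)
  then show ?case using Cons by (metis foldl_Cons order.trans)
qed

lemma fold_tr:
  assumes sub: "submodular_on U g" and BU: "B \<subseteq> U"
  shows "A \<subseteq> B \<Longrightarrow> set xs \<inter> P = {} \<Longrightarrow> distinct xs \<Longrightarrow>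
    (\<forall>y \<in> A \<inter> P. g A - g (A - {y}) \<ge> 0) \<Longrightarrow>
    (\<forall>y \<in> foldl (trstep g B) A xs \<inter> (P \<union> set xs). g (foldl (trstep g B) A xs) - g (foldl (trstep g B) A xs - {y}) \<ge> 0)"
proof (induction xs arbitrary: A P)
  case Nil then show ?case by simp
next
  case (Cons x xs)
  define A' where "A' = trstep g B A x"
  have A'B: "A' \<subseteq> B" using Cons.prems by (auto simp: A'_def trstep_def)
  have sinv: "\<forall>y \<in> A' \<inter> insert x P. g A' - g (A' - {y}) \<ge> 0"
  proof
    fix y assume y: "y \<in> A' \<inter> insert x P"
    show "g A' - g (A' - {y}) \<ge> 0"
    proof (cases "x \<in> B \<and> x \<in> A \<and> g A - g (A - {x}) < 0")
      case True
      then have A'e: "A' = A - {x}" by (simp add: A'_def trstep_def)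
      then have yA: "y \<in> A \<inter> P" "y \<noteq> x" using y by auto
      have "g A' - g (A' - {y}) \<ge> g A - g (A - {y})"
        using marg_mono[OF sub, of A' A y] A'e yA Cons.prems BU by auto
      moreover have "g A - g (A - {y}) \<ge> 0" using Cons.prems(4) yA by auto
      ultimately show ?thesis by linarith
    next
      case False
      then have A'e: "A' = A" unfolding A'_def trstep_def by auto
      show ?thesis
      proof (cases "y = x")
        case True then show ?thesis using False y A'e Cons.prems(1) by auto
      next
        case f2: False then show ?thesis using y A'e Cons.prems(4) by auto
      qed
    qed
  qed
  have "set xs \<inter> insert x P = {}" "distinct xs" using Cons.prems by auto
  from Cons.IH[OF A'B this sinv] show ?case
    by (simp add: A'_def Un_commute insert_commute)
qed

lemma Trim_props:
  assumes sub: "submodular_on U g" and BU: "B \<subseteq> U" and d: "distinct ord" and so: "B \<subseteq> set ord"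
  shows "Trim g ord B \<subseteq> B" "g (Trim g ord B) \<ge> g B"
    "\<And>y. y \<in> Trim g ord B \<Longrightarrow> g (Trim g ord B) - g (Trim g ord B - {y}) \<ge> 0"
proof -
  show s: "Trim g ord B \<subseteq> B" unfolding Trim_eq by (rule fold_sub) simp
  show "g (Trim g ord B) \<ge> g B" unfolding Trim_eq by (rule fold_val)
  fix y assume y: "y \<in> Trim g ord B"
  have "\<forall>y \<in> Trim g ord B \<inter> ({} \<union> set ord). g (Trim g ord B) - g (Trim g ord B - {y}) \<ge> 0"
    unfolding Trim_eq by (rule fold_tr[OF sub BU]) (use d in auto)
  then show "g (Trim g ord B) - g (Trim g ord B - {y}) \<ge> 0" using y s so by auto
qed


lemma E_mono:
  fixes f g :: "'b \<Rightarrow> real"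
  assumes "finite (set_pmf p)" "\<And>x. x \<in> set_pmf p \<Longrightarrow> f x \<le> g x"
  shows "measure_pmf.expectation p f \<le> measure_pmf.expectation p g"
  using assms by (intro integral_mono_AE integrable_measure_pmf_finite) (auto simp: AE_measure_pmf_iff)

lemma E_sum:
  fixes f :: "'c \<Rightarrow> 'b \<Rightarrow> real"
  assumes "finite (set_pmf p)"
  shows "measure_pmf.expectation p (\<lambda>x. \<Sum>i\<in>I. f i x) = (\<Sum>i\<in>I. measure_pmf.expectation p (f i))"
  using assms by (intro Bochner_Integration.integral_sum integrable_measure_pmf_finite)

lemma E_add:
  fixes f g :: "'b \<Rightarrow> real"
  assumes "finite (set_pmf p)"
  shows "measure_pmf.expectation p (\<lambda>x. f x + g x) = measure_pmf.expectation p f + measure_pmf.expectation p g"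
  using assms by (intro Bochner_Integration.integral_add integrable_measure_pmf_finite)

lemma E_nonneg:
  fixes f :: "'b \<Rightarrow> real"
  assumes "\<And>x. x \<in> set_pmf p \<Longrightarrow> f x \<ge> 0"
  shows "measure_pmf.expectation p f \<ge> 0"
  using assms by (intro integral_nonneg_AE) (auto simp: AE_measure_pmf_iff)

lemma abel_ineq:
  fixes r H :: "nat \<Rightarrow> real"
  assumes dec: "\<And>i j. i \<le> j \<Longrightarrow> j \<le> n \<Longrightarrow> r j \<le> r i" and rn: "\<And>j. r j \<ge> 0"
    and Hn: "\<And>j. H j \<ge> 0"
  shows "(\<Sum>j<Suc n. r j * (H (Suc j) - H j)) \<ge> r n * H (Suc n) - r 0 * H 0"
  using dec
proof (induction n)
  case 0 then show ?case by (simp add: algebra_simps)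
next
  case (Suc n)
  have IH: "(\<Sum>j<Suc n. r j * (H (Suc j) - H j)) \<ge> r n * H (Suc n) - r 0 * H 0"
    using Suc by auto
  have "(r n - r (Suc n)) * H (Suc n) \<ge> 0"
    using Suc.prems(1)[of n "Suc n"] Hn[of "Suc n"] by (intro mult_nonneg_nonneg) auto
  then show ?case using IH by (simp add: algebra_simps)
qed

lemma telescope_sub:
  assumes sub: "submodular_on U h" and dys: "distinct ys" and sU: "set ys \<subseteq> U" and AU: "A \<subseteq> U"
  shows "j \<le> length ys \<Longrightarrow> h (A \<inter> set (take j ys)) \<ge> h {} +
      (\<Sum>i<j. (if ys ! i \<in> A then 1 else 0) * (h (set (take (Suc i) ys)) - h (set (take i ys))))"
proof (induction j)
  case 0 then show ?case by simp
next
  case (Suc j)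
  have jl: "j < length ys" using Suc by auto
  let ?y = "ys ! j"
  have tk: "set (take (Suc j) ys) = insert ?y (set (take j ys))"
    using jl by (simp add: take_Suc_conv_app_nth)
  have ynot: "?y \<notin> set (take j ys)"
  proof -
    have d: "distinct (take j ys @ drop j ys)" using dys by simp
    have "ys ! j \<in> set (drop j ys)" using Cons_nth_drop_Suc[OF jl] by (metis list.set_intros(1))
    moreover have "set (take j ys) \<inter> set (drop j ys) = {}" using d unfolding distinct_append by blast
    ultimately show ?thesis by blast
  qed
  have IH: "h (A \<inter> set (take j ys)) \<ge> h {} +
      (\<Sum>i<j. (if ys ! i \<in> A then 1 else 0) * (h (set (take (Suc i) ys)) - h (set (take i ys))))"
    using Suc by auto
  define F where "F i = (if ys ! i \<in> A then 1 else 0) * (h (set (take (Suc i) ys)) - h (set (take i ys)))" for i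
  have sS: "(\<Sum>i<Suc j. F i) = (\<Sum>i<j. F i) + F j" by simp
  have IH': "h (A \<inter> set (take j ys)) \<ge> h {} + (\<Sum>i<j. F i)" using IH unfolding F_def .
  have "h (A \<inter> set (take (Suc j) ys)) \<ge> h {} + (\<Sum>i<Suc j. F i)"
  proof (cases "?y \<in> A")
    case True
    have e: "A \<inter> set (take (Suc j) ys) = insert ?y (A \<inter> set (take j ys))" using tk True by auto
    have "h (insert ?y (A \<inter> set (take j ys))) - h (A \<inter> set (take j ys)) \<ge>
          h (insert ?y (set (take j ys))) - h (set (take j ys))"
    proof -
      have "A \<inter> set (take j ys) \<subseteq> set (take j ys)" "set (take j ys) \<subseteq> U" "?y \<in> U"
        using sU nth_mem[OF jl] set_take_subset[of j ys] by blast+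
      then show ?thesis using ynot by (intro sub_app[OF sub])
    qed
    moreover have "F j = h (insert ?y (set (take j ys))) - h (set (take j ys))"
      unfolding F_def using True tk by simp
    ultimately show ?thesis unfolding e sS using IH' by linarith
  next
    case False
    have e: "A \<inter> set (take (Suc j) ys) = A \<inter> set (take j ys)" using tk False by auto
    have "F j = 0" unfolding F_def using False by simp
    then show ?thesis unfolding e sS using IH' by linarith
  qed
  then show ?case unfolding F_def .
qed

lemma sampling_lemma:
  fixes D :: "'b set pmf" and h :: "'b set \<Rightarrow> real"
  assumes fU: "finite U" and fD: "finite (set_pmf D)" and DU: "\<And>A. A \<in> set_pmf D \<Longrightarrow> A \<subseteq> U"
    and sub: "submodular_on U h" and nn: "\<And>A. A \<subseteq> U \<Longrightarrow> h A \<ge> 0"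
    and pr: "\<And>u. u \<in> U \<Longrightarrow> measure_pmf.expectation D (\<lambda>A. if u \<in> A then 1 else 0) \<le> p"
    and p0: "p \<ge> 0"
  shows "measure_pmf.expectation D h \<ge> (1 - p) * h {}"
proof -
  define q where "q u = measure_pmf.expectation D (\<lambda>A. if u \<in> A then 1 else (0::real))" for u
  obtain xs where xs: "set xs = U" "distinct xs" using finite_distinct_list[OF fU] by blast
  define ys where "ys = sort_key (\<lambda>u. - q u) xs"
  have ys: "set ys = U" "distinct ys" "sorted (map (\<lambda>u. - q u) ys)"
    unfolding ys_def using xs by (simp_all add: distinct_sort sorted_sort_key)
  define n where "n = length ys"
  define H where "H j = h (set (take j ys))" for j
  define r where "r j = q (ys ! j)" for j
  have pt: "\<And>A. A \<in> set_pmf D \<Longrightarrow> h A \<ge> h {} + (\<Sum>i<n. (if ys ! i \<in> A then 1 else 0) * (H (Suc i) - H i))"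
  proof -
    fix A assume "A \<in> set_pmf D"
    then have AU: "A \<subseteq> U" using DU by auto
    have sU: "set ys \<subseteq> U" using ys(1) by simp
    have nl: "n \<le> length ys" by (simp add: n_def)
    have tel: "h (A \<inter> set (take n ys)) \<ge> h {} + (\<Sum>i<n. (if ys ! i \<in> A then 1 else 0) * (H (Suc i) - H i))"
      unfolding H_def by (rule telescope_sub[OF sub ys(2) sU AU nl])
    have eqA: "A \<inter> set (take n ys) = A" using AU ys(1) by (auto simp: n_def)
    show "h A \<ge> h {} + (\<Sum>i<n. (if ys ! i \<in> A then 1 else 0) * (H (Suc i) - H i))"
      using tel unfolding eqA .
  qed
  have "measure_pmf.expectation D h \<ge> measure_pmf.expectation D (\<lambda>A. h {} + (\<Sum>i<n. (if ys ! i \<in> A then 1 else 0) * (H (Suc i) - H i)))"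
    using pt fD by (intro E_mono) auto
  also have "measure_pmf.expectation D (\<lambda>A. h {} + (\<Sum>i<n. (if ys ! i \<in> A then 1 else 0) * (H (Suc i) - H i)))
     = h {} + (\<Sum>i<n. r i * (H (Suc i) - H i))"
  proof -
    have "measure_pmf.expectation D (\<lambda>A. h {} + (\<Sum>i<n. (if ys ! i \<in> A then 1 else 0) * (H (Suc i) - H i)))
      = h {} + (\<Sum>i<n. measure_pmf.expectation D (\<lambda>A. (if ys ! i \<in> A then 1 else 0) * (H (Suc i) - H i)))"
      unfolding E_add[OF fD] E_sum[OF fD] by simp
    also have "\<dots> = h {} + (\<Sum>i<n. r i * (H (Suc i) - H i))"
      unfolding r_def q_def by (simp only: integral_mult_left_zero)
    finally show ?thesis .
  qed
  finally have E1: "measure_pmf.expectation D h \<ge> h {} + (\<Sum>i<n. r i * (H (Suc i) - H i))" .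
  have H0: "H 0 = h {}" by (simp add: H_def)
  have Hn: "\<And>j. H j \<ge> 0"
  proof -
    fix j have "set (take j ys) \<subseteq> U" using set_take_subset[of j ys] ys(1) by blast
    then show "H j \<ge> 0" unfolding H_def by (rule nn)
  qed
  have rnn: "\<And>j. r j \<ge> 0" unfolding r_def q_def by (intro E_nonneg) auto
  show ?thesis
  proof (cases n)
    case 0
    have "p * h {} \<ge> 0" using p0 nn[of "{}"] by (simp add: mult_nonneg_nonneg)
    then show ?thesis using E1 H0 0 by (simp add: algebra_simps)
  next
    case (Suc n')
    have dec: "\<And>i j. i \<le> j \<Longrightarrow> j \<le> n' \<Longrightarrow> r j \<le> r i"
    proof -
      fix i j assume "i \<le> j" "j \<le> n'"
      then have il: "i < length ys" "j < length ys" "i \<le> j" using Suc n_def by auto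
      have "map (\<lambda>u. - q u) ys ! i \<le> map (\<lambda>u. - q u) ys ! j"
        by (rule sorted_nth_mono[OF ys(3)]) (use il in simp_all)
      then have "- q (ys ! i) \<le> - q (ys ! j)" using il by simp
      then show "r j \<le> r i" unfolding r_def by linarith
    qed
    have ab: "(\<Sum>j<Suc n'. r j * (H (Suc j) - H j)) \<ge> r n' * H (Suc n') - r 0 * H 0"
      using abel_ineq[of n' r H, OF dec rnn Hn] by blast
    have r0: "r 0 \<le> p"
    proof -
      have "0 < length ys" using Suc n_def by simp
      then have "ys ! 0 \<in> set ys" by (rule nth_mem)
      then have "ys ! 0 \<in> U" using ys(1) by simp
      from pr[OF this] show ?thesis unfolding r_def q_def .
    qed
    have "r n' * H (Suc n') \<ge> 0" using rnn Hn by (simp add: mult_nonneg_nonneg)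
    moreover have "r 0 * H 0 \<le> p * H 0" using r0 Hn by (simp add: mult_right_mono)
    moreover have "(\<Sum>i<n. r i * (H (Suc i) - H i)) = (\<Sum>j<Suc n'. r j * (H (Suc j) - H j))"
      using Suc by simp
    moreover have "(1 - p) * h {} = h {} - p * H 0" using H0 by (simp add: algebra_simps)
    ultimately show ?thesis using E1 ab by linarith
  qed
qed


lemma e_ge: "exp (1::real) \<ge> 5/2"
  using exp_lower_Taylor_quadratic[of "1::real"] by simp

lemma num_small:
  assumes "l \<ge> 2" "l \<le> (9::nat)"
  shows "(1 - 1/real l)^l - (1 - 2/real l)^l \<ge> 1/5"
proof -
  have "l = 2 \<or> l = 3 \<or> l = 4 \<or> l = 5 \<or> l = 6 \<or> l = 7 \<or> l = 8 \<or> l = 9" using assms by auto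
  then show ?thesis by (elim disjE) (simp_all add: power_divide)
qed

lemma num_large:
  assumes "l \<ge> (10::nat)"
  shows "(1 - 1/real l)^l - (1 - 2/real l)^l \<ge> 1/(2 * exp 1)"
proof -
  define a where "a = 1 - 1/real l"
  define b where "b = 1 - 2/real l"
  have l1: "real l \<ge> 10" using assms by simp
  have a09: "a \<ge> 9/10" using l1 unfolding a_def by (simp add: field_simps)
  have b0: "b \<ge> 0" using l1 unfolding b_def by (simp add: field_simps)
  have ainv: "a * (1 + 1/(real l - 1)) = 1" using l1 unfolding a_def by (simp add: field_simps)
  have "1 + 1/(real l - 1) \<le> exp (1/(real l - 1))" by (rule exp_ge_add_one_self)
  then have "a * (1 + 1/(real l - 1)) \<le> a * exp (1/(real l - 1))" using a09 by (intro mult_left_mono) auto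
  then have "1 \<le> a * exp (1/(real l - 1))" using ainv by linarith
  then have ae: "a \<ge> exp (- (1/(real l - 1)))"
    by (simp add: exp_minus field_simps)
  have "a ^ (l - 1) \<ge> exp (- (1/(real l - 1))) ^ (l - 1)"
    using ae by (intro power_mono) auto
  also have "exp (- (1/(real l - 1))) ^ (l - 1) = exp (real (l - 1) * (- (1/(real l - 1))))"
    by (simp only: exp_of_nat_mult)
  also have "real (l - 1) * (- (1/(real l - 1))) = -1" using l1 by (simp add: of_nat_diff field_simps)
  finally have a1: "a ^ (l - 1) \<ge> exp (-1)" .
  have lS: "l = Suc (l - 1)" using assms by simp
  have al: "a ^ l = a * a ^ (l - 1)" by (subst lS) simp
  have "a ^ l \<ge> a * exp (-1)" unfolding al using a1 a09 by (intro mult_left_mono) auto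
  have "b \<le> exp (-2/real l)" unfolding b_def using exp_ge_add_one_self[of "-2/real l"] by simp
  then have "b ^ l \<le> exp (-2/real l) ^ l" using b0 by (intro power_mono) auto
  also have "exp (-2/real l) ^ l = exp (real l * (-2/real l))" by (simp only: exp_of_nat_mult)
  also have "real l * (-2/real l) = -2" using l1 by simp
  finally have b2: "b ^ l \<le> exp (-2)" .
  have em: "exp (-1::real) \<le> 2/5" using e_ge by (simp add: exp_minus field_simps)
  have epos: "exp (-1::real) > 0" by simp
  have e2: "exp (-2::real) = exp (-1) * exp (-1)" by (simp flip: exp_add)
  have "a * exp (-1) - exp (-2) = exp (-1) * (a - exp (-1))" using e2 by (simp add: algebra_simps)
  also have "\<dots> \<ge> exp (-1) * (1/2)" using em a09 epos by (intro mult_left_mono) auto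
  finally have "a ^ l - b ^ l \<ge> exp (-1) / 2" using \<open>a ^ l \<ge> a * exp (-1)\<close> b2 by linarith
  moreover have "exp (-1) / 2 = 1 / (2 * exp (1::real))" by (simp add: exp_minus inverse_eq_divide)
  ultimately show ?thesis unfolding a_def b_def by simp
qed

lemma num_bound:
  assumes "l \<ge> (2::nat)"
  shows "(1 - 1/real l)^l - (1 - 2/real l)^l \<ge> 1/(2 * exp 1)"
proof (cases "l \<le> 9")
  case True
  have "1/(2 * exp (1::real)) \<le> 1/5" using e_ge by (simp add: field_simps)
  then show ?thesis using num_small[OF assms True] by linarith
next
  case False then show ?thesis using num_large by simp
qed


lemma sub_shift:
  assumes "submodular_on U g" "Q \<subseteq> U"
  shows "submodular_on U (\<lambda>X. g (Q \<union> X))"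
  unfolding submodular_on_def
proof (intro allI impI, elim conjE)
  fix A A' x assume h: "A \<subseteq> A'" "A' \<subseteq> U" "x \<in> U" "x \<notin> A'"
  show "g (Q \<union> insert x A) - g (Q \<union> A) \<ge> g (Q \<union> insert x A') - g (Q \<union> A')"
  proof (cases "x \<in> Q")
    case True
    then have "Q \<union> insert x A = Q \<union> A" "Q \<union> insert x A' = Q \<union> A'" by auto
    then show ?thesis by simp
  next
    case False
    have "Q \<union> A \<subseteq> Q \<union> A'" "Q \<union> A' \<subseteq> U" "x \<notin> Q \<union> A'" using h False assms by auto
    from sub_app[OF assms(1) this(1,2) h(3) this(3)]
    show ?thesis by simp
  qed
qed

lemma E_bind:
  fixes h :: "'b \<Rightarrow> real"
  assumes "finite (set_pmf p)" "\<And>x. x \<in> set_pmf p \<Longrightarrow> finite (set_pmf (f x))"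
  shows "measure_pmf.expectation (bind_pmf p f) h = measure_pmf.expectation p (\<lambda>x. measure_pmf.expectation (f x) h)"
  using assms
  by (simp add: pmf_expectation_bind[of "set_pmf p"] integral_measure_pmf[of "set_pmf p"])

context
  fixes \<Omega> :: "'a set" and f :: "nat \<Rightarrow> 'a set \<Rightarrow> real" and m k l :: nat
    and selM :: "('a + nat) set \<Rightarrow> (nat \<Rightarrow> ('a + nat) set) \<Rightarrow> ('a + nat) set"
    and ch :: "nat \<Rightarrow> ('a + nat) \<Rightarrow> ('a + nat) set \<Rightarrow> ('a + nat)"
    and ord :: "('a + nat) list" and Opt :: "'a set" and Oi :: "nat \<Rightarrow> 'a set"
  assumes fin: "finite \<Omega>" and k1: "k \<ge> 1" and l1: "l \<ge> 1"
    and nn: "\<And>i A. i < m \<Longrightarrow> A \<subseteq> \<Omega> \<Longrightarrow> f i A \<ge> 0"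
    and sub: "\<And>i. i < m \<Longrightarrow> submodular_on \<Omega> (f i)"
    and vsel: "valid_selM f m k l \<Omega> selM"
    and vch: "\<And>i. i < m \<Longrightarrow> valid_argmax_choice (ext_fun (f i)) (ch i)"
    and dord: "distinct ord" and sord: "set ord = ext_ground \<Omega> l"
    and Opt: "Opt \<subseteq> \<Omega>" "card Opt \<le> l"
    and Osub: "\<And>i. Oi i \<subseteq> Opt" and Ocard: "\<And>i. card (Oi i) \<le> k"
begin

abbreviation "G \<equiv> ext_ground \<Omega> l"
abbreviation "gg i \<equiv> ext_fun (f i)"
abbreviation "stp \<equiv> sg_step f m k selM ch ord"
abbreviation "upd x st \<equiv> sg_update f m k ch ord x st"
abbreviation "Phi st \<equiv> (\<Sum>i<m. gg i (snd st i))"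
abbreviation "Psi i st \<equiv> gg i (Inl ` Oi i \<union> snd st i)"
abbreviation "PP t \<equiv> ((\<lambda>p. bind_pmf p stp) ^^ t) (return_pmf ({}, (\<lambda>_. {})))"

definition sinv :: "('a + nat) set \<times> (nat \<Rightarrow> ('a + nat) set) \<Rightarrow> bool" where
  "sinv st \<longleftrightarrow> finite (fst st) \<and> fst st \<subseteq> G \<and> (\<forall>i<m. snd st i \<subseteq> fst st \<and> card (snd st i) \<le> k \<and>
      (\<forall>y\<in>snd st i. gg i (snd st i) - gg i (snd st i - {y}) \<ge> 0))"

lemma finG: "finite G"
  using fin by (simp add: ext_ground_def)

lemma sub_g: "i < m \<Longrightarrow> submodular_on G (gg i)"
  using sub ext_sub by blast

lemma nn_g: "i < m \<Longrightarrow> A \<subseteq> G \<Longrightarrow> gg i A \<ge> 0"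
proof -
  assume "i < m" "A \<subseteq> G"
  then have "Inl -` A \<subseteq> \<Omega>" by (auto simp: ext_ground_def)
  then show ?thesis using nn \<open>i < m\<close> by (simp add: ext_fun_def)
qed

lemma selM_props: "selM S T \<subseteq> G" "card (selM S T) = l" "finite (selM S T)" "selM S T \<noteq> {}"
proof -
  show s: "selM S T \<subseteq> G" "card (selM S T) = l" using vsel by (auto simp: valid_selM_def)
  show f: "finite (selM S T)" using s finG finite_subset by blast
  show "selM S T \<noteq> {}" using s l1 by auto
qed

lemma upd_inv:
  assumes I: "sinv st" and x: "x \<in> G"
  shows "sinv (upd x st) \<and> card (fst (upd x st)) \<le> Suc (card (fst st))"
proof -
  obtain S T where st: "st = (S, T)" by fastforce
  have S: "finite S" "S \<subseteq> G" using I st by (auto simp: sinv_def)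
  have T: "\<And>i. i < m \<Longrightarrow> T i \<subseteq> S \<and> card (T i) \<le> k" using I st by (auto simp: sinv_def)
  define T' where "T' i = (if i < m \<and> Nab (gg i) k x (T i) > 0
           then Trim (gg i) ord (insert x (T i - Rep (gg i) k (ch i) x (T i))) else T i)" for i
  have u: "upd x st = (insert x S, T')" by (simp add: sg_update_def st T'_def fun_eq_iff)
  have Ti: "\<And>i. i < m \<Longrightarrow> T' i \<subseteq> insert x S \<and> card (T' i) \<le> k \<and>
      (\<forall>y\<in>T' i. gg i (T' i) - gg i (T' i - {y}) \<ge> 0)"
  proof -
    fix i assume i: "i < m"
    show "T' i \<subseteq> insert x S \<and> card (T' i) \<le> k \<and> (\<forall>y\<in>T' i. gg i (T' i) - gg i (T' i - {y}) \<ge> 0)"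
    proof (cases "Nab (gg i) k x (T i) > 0")
      case True
      define B where "B = insert x (T i - Rep (gg i) k (ch i) x (T i))"
      have fT: "finite (T i)" using T[OF i] S finite_subset by blast
      have rg: "card B \<le> k" using Rep_gain[OF fT True vch[OF i] k1] T[OF i] by (simp add: B_def)
      have BS: "B \<subseteq> insert x S" using T[OF i] by (auto simp: B_def)
      have BG: "B \<subseteq> G" using BS S x by auto
      have e: "T' i = Trim (gg i) ord B" using True i by (simp add: T'_def B_def)
      note tp = Trim_props[OF sub_g[OF i] BG dord] 
      have Bo: "B \<subseteq> set ord" using BG sord by simp
      have fB: "finite B" using BG finG finite_subset by blast
      have "T' i \<subseteq> B" using tp(1)[OF Bo] e by simp
      moreover have "card (T' i) \<le> k" using card_mono[OF fB \<open>T' i \<subseteq> B\<close>] rg by simp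
      ultimately show ?thesis using tp(3)[OF Bo] e BS by auto
    next
      case False
      then have "T' i = T i" by (simp add: T'_def)
      then show ?thesis using I st i by (auto simp: sinv_def)
    qed
  qed
  have "card (insert x S) \<le> Suc (card S)" by (simp add: card_insert_if S)
  then show ?thesis using u Ti S x st by (auto simp: sinv_def)
qed

lemma upd_gain:
  assumes I: "sinv st" and x: "x \<in> G"
  shows "Phi (upd x st) \<ge> Phi st + (\<Sum>i<m. Nab (gg i) k x (snd st i))"
proof -
  obtain S T where st: "st = (S, T)" by fastforce
  have S: "finite S" "S \<subseteq> G" using I st by (auto simp: sinv_def)
  have T: "\<And>i. i < m \<Longrightarrow> T i \<subseteq> S \<and> card (T i) \<le> k" using I st by (auto simp: sinv_def)
  have "(\<Sum>i<m. gg i (T i) + Nab (gg i) k x (T i)) \<le> (\<Sum>i<m. gg i (snd (upd x st) i))"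
  proof (rule sum_mono)
    fix i assume "i \<in> {..<m}"
    then have i: "i < m" by simp
    have fT: "finite (T i)" using T[OF i] S finite_subset by blast
    show "gg i (T i) + Nab (gg i) k x (T i) \<le> gg i (snd (upd x st) i)"
    proof (cases "Nab (gg i) k x (T i) > 0")
      case True
      define B where "B = insert x (T i - Rep (gg i) k (ch i) x (T i))"
      have rg: "gg i B = gg i (T i) + Nab (gg i) k x (T i)"
        using Rep_gain[OF fT True vch[OF i] k1] T[OF i] by (simp add: B_def)
      have BG: "B \<subseteq> G" using T[OF i] S x by (auto simp: B_def)
      have e: "snd (upd x st) i = Trim (gg i) ord B" using True i by (simp add: sg_update_def st B_def)
      have "gg i (Trim (gg i) ord B) \<ge> gg i B"
        using Trim_props(2)[OF sub_g[OF i] BG dord] BG sord by simp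
      then show ?thesis using rg e by simp
    next
      case False
      then have "Nab (gg i) k x (T i) = 0" using Nab_nonneg[OF fT, of "gg i" k x] by simp
      moreover have "snd (upd x st) i = T i" using False by (simp add: sg_update_def st)
      ultimately show ?thesis by simp
    qed
  qed
  then show ?thesis using st by (simp add: sum.distrib)
qed

lemma set_stp: "set_pmf (stp st) = (\<lambda>x. upd x st) ` selM (fst st) (snd st)"
  using selM_props[of "fst st" "snd st"] by (simp add: sg_step_def)

lemma fin_stp: "finite (set_pmf (stp st))"
  using selM_props[of "fst st" "snd st"] by (simp add: set_stp)

lemma E_stp: "measure_pmf.expectation (stp st) h = (\<Sum>x\<in>selM (fst st) (snd st). h (upd x st)) / real l"
  using selM_props[of "fst st" "snd st"] by (simp add: sg_step_def integral_pmf_of_set)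

lemma Oprime: "\<exists>O'. O' \<subseteq> G \<and> card O' = l \<and> Inl ` Opt \<subseteq> O'"
proof -
  define O' where "O' = Inl ` Opt \<union> Inr ` {..< l - card Opt}"
  have fo: "finite Opt" using Opt fin finite_subset by blast
  have "card O' = card (Inl ` Opt :: ('a + nat) set) + card (Inr ` {..< l - card Opt} :: ('a + nat) set)"
    unfolding O'_def by (rule card_Un_disjoint) (use fo in auto)
  also have "\<dots> = card Opt + (l - card Opt)" by (simp add: card_image)
  also have "\<dots> = l" using Opt by simp
  finally have "card O' = l" .
  moreover have "O' \<subseteq> G" using Opt by (auto simp: O'_def ext_ground_def)
  ultimately show ?thesis unfolding O'_def by blast
qed

lemma score_bound:
  assumes I: "sinv st"
  shows "score f m k (snd st) (selM (fst st) (snd st)) \<ge> (\<Sum>i<m. Psi i st - 2 * gg i (snd st i))"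
proof -
  obtain S T where st: "st = (S, T)" by fastforce
  have S: "finite S" "S \<subseteq> G" using I st by (auto simp: sinv_def)
  have T: "\<And>i. i < m \<Longrightarrow> T i \<subseteq> S \<and> card (T i) \<le> k \<and> (\<forall>y\<in>T i. gg i (T i) - gg i (T i - {y}) \<ge> 0)"
    using I st by (auto simp: sinv_def)
  obtain O' where O': "O' \<subseteq> G" "card O' = l" "Inl ` Opt \<subseteq> O'" using Oprime by blast
  have fO': "finite O'" using O' finG finite_subset by blast
  have "score f m k T (selM S T) \<ge> score f m k T O'" using vsel O' by (auto simp: valid_selM_def)
  moreover have "score f m k T O' = (\<Sum>i<m. \<Sum>x\<in>O'. Nab (gg i) k x (T i))"
    unfolding score_def by (rule sum.swap)
  moreover have "(\<Sum>i<m. \<Sum>x\<in>O'. Nab (gg i) k x (T i)) \<ge> (\<Sum>i<m. gg i (Inl ` Oi i \<union> T i) - 2 * gg i (T i))"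
  proof (rule sum_mono)
    fix i assume "i \<in> {..<m}"
    then have i: "i < m" by simp
    have fT: "finite (T i)" using T[OF i] S finite_subset by blast
    have QO: "Inl ` Oi i \<subseteq> O'" using Osub O' by blast
    have "(\<Sum>x\<in>O'. Nab (gg i) k x (T i)) \<ge> (\<Sum>x\<in>Inl ` Oi i. Nab (gg i) k x (T i))"
      by (rule sum_mono2[OF fO' QO]) (use Nab_nonneg fT in auto)
    moreover have "(\<Sum>x\<in>Inl ` Oi i. Nab (gg i) k x (T i)) \<ge> gg i (Inl ` Oi i \<union> T i) - 2 * gg i (T i)"
    proof (rule key_exchange[OF sub_g[OF i] fT])
      show "T i \<subseteq> G" "card (T i) \<le> k" using T[OF i] S by auto
      have fo: "finite (Oi i)" using Osub Opt fin finite_subset by metis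
      show "finite (Inl ` Oi i :: ('a + nat) set)" using fo by simp
      show "Inl ` Oi i \<subseteq> G" using QO O' by blast
      show "card (Inl ` Oi i :: ('a + nat) set) \<le> k" using Ocard by (simp add: card_image)
      show "\<And>A. A \<subseteq> G \<Longrightarrow> gg i A \<ge> 0" using nn_g i by blast
      show "\<And>y. y \<in> T i \<Longrightarrow> gg i (T i) - gg i (T i - {y}) \<ge> 0" using T[OF i] by blast
    qed
    ultimately show "gg i (Inl ` Oi i \<union> T i) - 2 * gg i (T i) \<le> (\<Sum>x\<in>O'. Nab (gg i) k x (T i))" by linarith
  qed
  ultimately show ?thesis using st by simp
qed


lemma E_stp_Phi:
  assumes I: "sinv st"
  shows "measure_pmf.expectation (stp st) (\<lambda>s. Phi s) \<ge> (1 - 2 / real l) * Phi st + (1 / real l) * (\<Sum>i<m. Psi i st)"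
    "measure_pmf.expectation (stp st) (\<lambda>s. Phi s) \<ge> Phi st"
proof -
  define M where "M = selM (fst st) (snd st)"
  have M: "M \<subseteq> G" "card M = l" "finite M" using selM_props M_def by auto
  have fS: "finite (snd st i)" if "i < m" for i
  proof -
    have "snd st i \<subseteq> fst st" "finite (fst st)" using I that by (auto simp: sinv_def)
    then show ?thesis using finite_subset by blast
  qed
  define sc where "sc = score f m k (snd st) M"
  have "(\<Sum>x\<in>M. Phi (upd x st)) \<ge> (\<Sum>x\<in>M. Phi st + (\<Sum>i<m. Nab (gg i) k x (snd st i)))"
    by (rule sum_mono) (use upd_gain[OF I] M in auto)
  also have "(\<Sum>x\<in>M. Phi st + (\<Sum>i<m. Nab (gg i) k x (snd st i))) = real l * Phi st + sc"
    unfolding sc_def score_def by (simp add: sum.distrib M(2))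
  finally have A: "(\<Sum>x\<in>M. Phi (upd x st)) \<ge> real l * Phi st + sc" .
  have E: "measure_pmf.expectation (stp st) (\<lambda>s. Phi s) = (\<Sum>x\<in>M. Phi (upd x st)) / real l"
    unfolding M_def by (rule E_stp)
  have lpos: "real l > 0" using l1 by simp
  have E2: "measure_pmf.expectation (stp st) (\<lambda>s. Phi s) \<ge> Phi st + sc / real l"
  proof -
    have "(real l * Phi st + sc) / real l \<le> (\<Sum>x\<in>M. Phi (upd x st)) / real l"
      using A lpos by (intro divide_right_mono) auto
    moreover have "(real l * Phi st + sc) / real l = Phi st + sc / real l" using lpos by (simp add: field_simps)
    ultimately show ?thesis using E by simp
  qed
  have sc1: "sc \<ge> (\<Sum>i<m. Psi i st - 2 * gg i (snd st i))"
    unfolding sc_def M_def by (rule score_bound[OF I])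
  have sc0: "sc \<ge> 0"
    unfolding sc_def score_def by (intro sum_nonneg) (auto intro!: Nab_nonneg fS)
  have "(\<Sum>i<m. Psi i st - 2 * gg i (snd st i)) = (\<Sum>i<m. Psi i st) - 2 * Phi st"
    by (simp add: sum_subtractf sum_distrib_left)
  then have "sc / real l \<ge> ((\<Sum>i<m. Psi i st) - 2 * Phi st) / real l"
    using sc1 lpos by (intro divide_right_mono) auto
  moreover have "Phi st + ((\<Sum>i<m. Psi i st) - 2 * Phi st) / real l = (1 - 2 / real l) * Phi st + (1 / real l) * (\<Sum>i<m. Psi i st)"
    using lpos by (simp add: field_simps)
  ultimately show "measure_pmf.expectation (stp st) (\<lambda>s. Phi s) \<ge> (1 - 2 / real l) * Phi st + (1 / real l) * (\<Sum>i<m. Psi i st)"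
    using E2 by linarith
  show "measure_pmf.expectation (stp st) (\<lambda>s. Phi s) \<ge> Phi st"
    using E2 sc0 lpos by (smt (verit) divide_nonneg_pos)
qed

lemma E_stp_ind:
  shows "measure_pmf.expectation (stp st) (\<lambda>s. if u \<in> fst s then 1 else 0)
      \<le> (1 - 1 / real l) * (if u \<in> fst st then 1 else 0) + 1 / real l"
proof -
  define M where "M = selM (fst st) (snd st)"
  have M: "M \<subseteq> G" "card M = l" "finite M" using selM_props M_def by auto
  have lpos: "real l > 0" using l1 by simp
  have E: "measure_pmf.expectation (stp st) (\<lambda>s. if u \<in> fst s then 1 else (0::real))
     = (\<Sum>x\<in>M. if u \<in> insert x (fst st) then 1 else 0) / real l"
    unfolding M_def by (subst E_stp) (simp add: sg_update_def)
  show ?thesis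
  proof (cases "u \<in> fst st")
    case True
    then have "(\<Sum>x\<in>M. if u \<in> insert x (fst st) then 1 else (0::real)) = real l" using M by simp
    then show ?thesis using E True lpos by (simp add: field_simps)
  next
    case False
    then have "(\<Sum>x\<in>M. if u \<in> insert x (fst st) then 1 else (0::real)) = (\<Sum>x\<in>M. if u = x then 1 else 0)"
      by (intro sum.cong) auto
    also have "\<dots> = (if u \<in> M then 1 else 0)" using M(3) by simp
    finally have "(\<Sum>x\<in>M. if u \<in> insert x (fst st) then 1 else (0::real)) \<le> 1" by simp
    then have "(\<Sum>x\<in>M. if u \<in> insert x (fst st) then 1 else (0::real)) / real l \<le> 1 / real l"
      using lpos by (intro divide_right_mono) auto
    then show ?thesis using E False by simp
  qed
qed

lemma sinv_init: "sinv ({}, (\<lambda>_. {}))"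
  by (simp add: sinv_def)

lemma PP_Suc: "PP (Suc t) = bind_pmf (PP t) stp"
  by simp

lemma PP_support: "finite (set_pmf (PP t)) \<and> (\<forall>st\<in>set_pmf (PP t). sinv st \<and> card (fst st) \<le> t)"
proof (induction t)
  case 0 then show ?case using sinv_init by simp
next
  case (Suc t)
  have f: "finite (set_pmf (PP (Suc t)))"
    unfolding PP_Suc using Suc fin_stp by simp
  have "\<forall>st'\<in>set_pmf (PP (Suc t)). sinv st' \<and> card (fst st') \<le> Suc t"
  proof
    fix st' assume "st' \<in> set_pmf (PP (Suc t))"
    then obtain st where st: "st \<in> set_pmf (PP t)" "st' \<in> set_pmf (stp st)" unfolding PP_Suc by auto
    then obtain x where x: "x \<in> selM (fst st) (snd st)" "st' = upd x st" by (auto simp: set_stp)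
    have xG: "x \<in> G" using x selM_props by blast
    have "sinv st" "card (fst st) \<le> t" using Suc st by auto
    then show "sinv st' \<and> card (fst st') \<le> Suc t" using upd_inv[OF \<open>sinv st\<close> xG] x by auto
  qed
  then show ?case using f by blast
qed

lemma E_PP_Suc:
  fixes h :: "('a + nat) set \<times> (nat \<Rightarrow> ('a + nat) set) \<Rightarrow> real"
  shows "measure_pmf.expectation (PP (Suc t)) h = measure_pmf.expectation (PP t) (\<lambda>st. measure_pmf.expectation (stp st) h)"
  unfolding PP_Suc by (rule E_bind) (use PP_support fin_stp in auto)

lemma q_bound: "measure_pmf.expectation (PP t) (\<lambda>s. if u \<in> fst s then 1 else 0) \<le> 1 - (1 - 1 / real l) ^ t"
proof (induction t)
  case 0 then show ?case by simp
next
  case (Suc t)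
  define a where "a = 1 - 1 / real l"
  have a0: "a \<ge> 0" using l1 by (simp add: a_def field_simps)
  have fP: "finite (set_pmf (PP t))" using PP_support by blast
  have "measure_pmf.expectation (PP (Suc t)) (\<lambda>s. if u \<in> fst s then 1 else 0)
      \<le> measure_pmf.expectation (PP t) (\<lambda>st. a * (if u \<in> fst st then 1 else 0) + 1 / real l)"
    unfolding E_PP_Suc a_def by (rule E_mono[OF fP]) (rule E_stp_ind)
  also have "\<dots> = a * measure_pmf.expectation (PP t) (\<lambda>st. if u \<in> fst st then 1 else 0) + 1 / real l"
    by (simp add: E_add[OF fP])
  also have "\<dots> \<le> a * (1 - a ^ t) + 1 / real l"
    using Suc a0 unfolding a_def by (intro add_right_mono mult_left_mono) auto
  also have "\<dots> = 1 - a ^ Suc t" by (simp add: a_def algebra_simps)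
  finally show ?case unfolding a_def .
qed

lemma Psi_bound:
  assumes i: "i < m"
  shows "measure_pmf.expectation (PP t) (\<lambda>st. Psi i st) \<ge> (1 - 1 / real l) ^ t * f i (Oi i)"
proof -
  define D where "D = map_pmf (\<lambda>st. snd st i) (PP t)"
  define h where "h X = gg i (Inl ` Oi i \<union> X)" for X
  define p where "p = 1 - (1 - 1 / real l) ^ t"
  have fP: "finite (set_pmf (PP t))" using PP_support by blast
  have QG: "Inl ` Oi i \<subseteq> G" using Osub Opt by (auto simp: ext_ground_def)
  have "measure_pmf.expectation D h \<ge> (1 - p) * h {}"
  proof (rule sampling_lemma[OF finG])
    show "finite (set_pmf D)" using fP by (simp add: D_def)
    show "\<And>A. A \<in> set_pmf D \<Longrightarrow> A \<subseteq> G"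
    proof -
      fix A assume "A \<in> set_pmf D"
      then obtain st where st: "st \<in> set_pmf (PP t)" "A = snd st i" by (auto simp: D_def)
      then have "sinv st" using PP_support by blast
      then have "snd st i \<subseteq> fst st" "fst st \<subseteq> G" using i by (auto simp: sinv_def)
      then show "A \<subseteq> G" using st by blast
    qed
    show "submodular_on G h" unfolding h_def by (rule sub_shift[OF sub_g[OF i] QG])
    show "\<And>A. A \<subseteq> G \<Longrightarrow> h A \<ge> 0" unfolding h_def using nn_g[OF i] QG by auto
    show "\<And>u. u \<in> G \<Longrightarrow> measure_pmf.expectation D (\<lambda>A. if u \<in> A then 1 else 0) \<le> p"
    proof -
      fix u
      have "measure_pmf.expectation D (\<lambda>A. if u \<in> A then 1 else (0::real))
          = measure_pmf.expectation (PP t) (\<lambda>st. if u \<in> snd st i then 1 else 0)" by (simp add: D_def)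
      also have "\<dots> \<le> measure_pmf.expectation (PP t) (\<lambda>st. if u \<in> fst st then 1 else 0)"
      proof (rule E_mono[OF fP])
        fix st assume "st \<in> set_pmf (PP t)"
        then have "sinv st" using PP_support by blast
        then have "snd st i \<subseteq> fst st" using i by (auto simp: sinv_def)
        then show "(if u \<in> snd st i then 1 else (0::real)) \<le> (if u \<in> fst st then 1 else 0)" by auto
      qed
      also have "\<dots> \<le> p" unfolding p_def by (rule q_bound)
      finally show "measure_pmf.expectation D (\<lambda>A. if u \<in> A then 1 else (0::real)) \<le> p" .
    qed
    show "p \<ge> 0" unfolding p_def using l1 by (simp add: power_le_one)
  qed
  moreover have "measure_pmf.expectation D h = measure_pmf.expectation (PP t) (\<lambda>st. Psi i st)"
    by (simp add: D_def h_def)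
  moreover have "h {} = f i (Oi i)" by (simp add: h_def ext_fun_def inj_vimage_image_eq)
  ultimately show ?thesis by (simp add: p_def)
qed

abbreviation "OPT \<equiv> (\<Sum>i<m. f i (Oi i))"

lemma OPT_nonneg: "OPT \<ge> 0"
  using nn Osub Opt by (intro sum_nonneg) blast

lemma recur:
  "measure_pmf.expectation (PP (Suc t)) (\<lambda>s. Phi s) \<ge>
     (1 - 2 / real l) * measure_pmf.expectation (PP t) (\<lambda>s. Phi s) + (1 / real l) * ((1 - 1 / real l) ^ t * OPT)"
  "measure_pmf.expectation (PP (Suc t)) (\<lambda>s. Phi s) \<ge> measure_pmf.expectation (PP t) (\<lambda>s. Phi s)"
proof -
  have fP: "finite (set_pmf (PP t))" using PP_support by blast
  have I: "\<And>st. st \<in> set_pmf (PP t) \<Longrightarrow> sinv st" using PP_support by blast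
  have c1: "measure_pmf.expectation (PP (Suc t)) (\<lambda>s. Phi s) \<ge>
        measure_pmf.expectation (PP t) (\<lambda>st. (1 - 2 / real l) * Phi st + (1 / real l) * (\<Sum>i<m. Psi i st))"
    unfolding E_PP_Suc by (rule E_mono[OF fP]) (use E_stp_Phi(1) I in auto)
  have c2: "measure_pmf.expectation (PP t) (\<lambda>st. (1 - 2 / real l) * Phi st + (1 / real l) * (\<Sum>i<m. Psi i st))
     = (1 - 2 / real l) * measure_pmf.expectation (PP t) (\<lambda>s. Phi s) + (1 / real l) * (\<Sum>i<m. measure_pmf.expectation (PP t) (\<lambda>st. Psi i st))"
    by (simp add: E_add[OF fP] E_sum[OF fP])
  have "(\<Sum>i<m. measure_pmf.expectation (PP t) (\<lambda>st. Psi i st)) \<ge> (1 - 1 / real l) ^ t * OPT"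
    unfolding sum_distrib_left by (rule sum_mono) (use Psi_bound in auto)
  then have c4: "(1 / real l) * (\<Sum>i<m. measure_pmf.expectation (PP t) (\<lambda>st. Psi i st)) \<ge> (1 / real l) * ((1 - 1 / real l) ^ t * OPT)"
    by (intro mult_left_mono) auto
  show "measure_pmf.expectation (PP (Suc t)) (\<lambda>s. Phi s) \<ge>
     (1 - 2 / real l) * measure_pmf.expectation (PP t) (\<lambda>s. Phi s) + (1 / real l) * ((1 - 1 / real l) ^ t * OPT)"
    using c1 c2 c4 by linarith
  show "measure_pmf.expectation (PP (Suc t)) (\<lambda>s. Phi s) \<ge> measure_pmf.expectation (PP t) (\<lambda>s. Phi s)"
    unfolding E_PP_Suc by (rule E_mono[OF fP]) (use E_stp_Phi(2) I in auto)
qed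

lemma Phi0: "measure_pmf.expectation (PP 0) (\<lambda>s. Phi s) \<ge> 0"
  by (auto intro!: sum_nonneg nn_g)

lemma dbound:
  assumes l2: "l \<ge> 2"
  shows "measure_pmf.expectation (PP t) (\<lambda>s. Phi s) \<ge> ((1 - 1 / real l) ^ t - (1 - 2 / real l) ^ t) * OPT"
proof (induction t)
  case 0 then show ?case using Phi0 by simp
next
  case (Suc t)
  define a where "a = 1 - 1 / real l"
  define b where "b = 1 - 2 / real l"
  have b0: "b \<ge> 0" using l2 by (simp add: b_def field_simps)
  have ab: "a = b + 1 / real l" by (simp add: a_def b_def)
  have "b * measure_pmf.expectation (PP t) (\<lambda>s. Phi s) \<ge> b * ((a ^ t - b ^ t) * OPT)"
    using Suc b0 unfolding a_def b_def by (intro mult_left_mono) auto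
  moreover have "b * ((a ^ t - b ^ t) * OPT) + (1 / real l) * (a ^ t * OPT) = (a ^ Suc t - b ^ Suc t) * OPT"
    by (simp add: ab algebra_simps)
  ultimately show ?case using recur(1)[of t] unfolding a_def b_def by linarith
qed

lemma dbound1:
  assumes l1': "l = 1"
  shows "measure_pmf.expectation (PP 1) (\<lambda>s. Phi s) \<ge> OPT / 2"
proof -
  have "measure_pmf.expectation (PP 1) (\<lambda>s. Phi s) \<ge> -1 * measure_pmf.expectation (PP 0) (\<lambda>s. Phi s) + OPT"
    using recur(1)[of 0] l1' by simp
  moreover have "measure_pmf.expectation (PP 1) (\<lambda>s. Phi s) \<ge> measure_pmf.expectation (PP 0) (\<lambda>s. Phi s)"
    using recur(2)[of 0] by simp
  ultimately show ?thesis by linarith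
qed

lemma Fobj_ge_Phi:
  assumes I: "sinv st"
  shows "Fobj f m k (Inl -` fst st) \<ge> Phi st"
  unfolding Fobj_def
proof (rule sum_mono)
  fix i assume "i \<in> {..<m}"
  then have i: "i < m" by simp
  define X where "X = (Inl -` fst st :: 'a set)"
  have fX: "finite X" unfolding X_def using I by (auto simp: sinv_def intro: finite_vimageI)
  have T0: "snd st i \<subseteq> fst st" "card (snd st i) \<le> k" "finite (fst st)"
    using I i by (auto simp: sinv_def)
  have T: "snd st i \<subseteq> fst st" "card (snd st i) \<le> k" "finite (snd st i)"
    using T0 finite_subset by auto
  have sub1: "Inl -` snd st i \<subseteq> X" using T unfolding X_def by auto
  have "card (Inl -` snd st i \<inter> UNIV :: 'a set) \<le> card (snd st i)"
    by (rule card_vimage_inj_on_le) (use T in auto)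
  then have c: "card (Inl -` snd st i :: 'a set) \<le> k" using T by simp
  have fin: "finite {f i A | A. A \<subseteq> X \<and> card A \<le> k}"
  proof -
    have "{f i A | A. A \<subseteq> X \<and> card A \<le> k} \<subseteq> f i ` Pow X" by auto
    then show ?thesis using fX finite_subset by blast
  qed
  have "f i (Inl -` snd st i) \<in> {f i A | A. A \<subseteq> X \<and> card A \<le> k}" using sub1 c by blast
  then have "f i (Inl -` snd st i) \<le> Max {f i A | A. A \<subseteq> X \<and> card A \<le> k}" using fin by (rule Max_ge[rotated])
  then show "gg i (snd st i) \<le> Max {f i A | A. A \<subseteq> Inl -` fst st \<and> card A \<le> k}"
    by (simp add: ext_fun_def X_def)
qed

lemma main_ctx:
  shows "(\<forall>S \<in> set_pmf (sampling_greedy f m k l selM ch ord). S \<subseteq> \<Omega> \<and> card S \<le> l) \<and>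
         measure_pmf.expectation (sampling_greedy f m k l selM ch ord) (Fobj f m k)
           \<ge> 1 / (2 * exp 1) * OPT"
proof
  have sg: "sampling_greedy f m k l selM ch ord = map_pmf (\<lambda>st. Inl -` fst st) (PP l)"
    by (simp add: sampling_greedy_def)
  have fP: "finite (set_pmf (PP l))" using PP_support by blast
  show "\<forall>S \<in> set_pmf (sampling_greedy f m k l selM ch ord). S \<subseteq> \<Omega> \<and> card S \<le> l"
  proof
    fix S assume "S \<in> set_pmf (sampling_greedy f m k l selM ch ord)"
    then obtain st where st: "st \<in> set_pmf (PP l)" "S = Inl -` fst st" unfolding sg by auto
    have I: "sinv st" "card (fst st) \<le> l" using PP_support st by auto
    have "S \<subseteq> \<Omega>" using I st by (auto simp: sinv_def ext_ground_def)
    moreover have "card (Inl -` fst st \<inter> UNIV :: 'a set) \<le> card (fst st)"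
      by (rule card_vimage_inj_on_le) (use I in \<open>auto simp: sinv_def\<close>)
    ultimately show "S \<subseteq> \<Omega> \<and> card S \<le> l" using st I by simp
  qed
  have E: "measure_pmf.expectation (sampling_greedy f m k l selM ch ord) (Fobj f m k) \<ge>
      measure_pmf.expectation (PP l) (\<lambda>s. Phi s)"
    unfolding sg integral_map_pmf by (rule E_mono[OF fP]) (use Fobj_ge_Phi PP_support in auto)
  show "measure_pmf.expectation (sampling_greedy f m k l selM ch ord) (Fobj f m k) \<ge> 1 / (2 * exp 1) * OPT"
  proof (cases "l = 1")
    case True
    have "1 / (2 * exp 1) * OPT \<le> OPT / 2"
    proof -
      have "1 / (2 * exp (1::real)) \<le> 1 / 2" by (simp add: field_simps)
      then show ?thesis using OPT_nonneg by (metis mult_right_mono times_divide_eq_left mult_1)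
    qed
    then show ?thesis using E dbound1[OF True] True by simp
  next
    case False
    then have l2: "l \<ge> 2" using l1 by simp
    have "1 / (2 * exp 1) * OPT \<le> ((1 - 1 / real l) ^ l - (1 - 2 / real l) ^ l) * OPT"
      using num_bound[OF l2] OPT_nonneg by (intro mult_right_mono) auto
    then show ?thesis using E dbound[OF l2, of l] by linarith
  qed
qed

end

theorem mainTheorem4:
  fixes \<Omega> :: "'a set" and f :: "nat \<Rightarrow> 'a set \<Rightarrow> real" and m k l :: nat
    and selM :: "('a + nat) set \<Rightarrow> (nat \<Rightarrow> ('a + nat) set) \<Rightarrow> ('a + nat) set"
    and ch :: "nat \<Rightarrow> ('a + nat) \<Rightarrow> ('a + nat) set \<Rightarrow> ('a + nat)"
    and ord :: "('a + nat) list" and Opt :: "'a set"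
  assumes "finite \<Omega>" and "k \<ge> 1" and "l \<ge> 1"
    and "\<And>i A. i < m \<Longrightarrow> A \<subseteq> \<Omega> \<Longrightarrow> f i A \<ge> 0"
    and "\<And>i. i < m \<Longrightarrow> submodular_on \<Omega> (f i)"
    and "valid_selM f m k l \<Omega> selM"
    and "\<And>i. i < m \<Longrightarrow> valid_argmax_choice (ext_fun (f i)) (ch i)"
    and "distinct ord" and "set ord = ext_ground \<Omega> l"
    and "Opt \<subseteq> \<Omega>" and "card Opt \<le> l"
    and "\<And>S'. S' \<subseteq> \<Omega> \<Longrightarrow> card S' \<le> l \<Longrightarrow> Fobj f m k S' \<le> Fobj f m k Opt"
  shows "(\<forall>S \<in> set_pmf (sampling_greedy f m k l selM ch ord). S \<subseteq> \<Omega> \<and> card S \<le> l) \<and>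
         measure_pmf.expectation (sampling_greedy f m k l selM ch ord) (Fobj f m k)
           \<ge> 1 / (2 * exp 1) * Fobj f m k Opt"
proof -
  define Oi where "Oi i = (SOME A. A \<subseteq> Opt \<and> card A \<le> k \<and> f i A = Max {f i A | A. A \<subseteq> Opt \<and> card A \<le> k})" for i
  have fo: "finite Opt" using assms(1,10) finite_subset by blast
  have Oi: "Oi i \<subseteq> Opt \<and> card (Oi i) \<le> k \<and> f i (Oi i) = Max {f i A | A. A \<subseteq> Opt \<and> card A \<le> k}" for i
  proof -
    have fin: "finite {f i A | A. A \<subseteq> Opt \<and> card A \<le> k}"
    proof -
      have "{f i A | A. A \<subseteq> Opt \<and> card A \<le> k} \<subseteq> f i ` Pow Opt" by auto
      then show ?thesis using fo finite_subset by blast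
    qed
    have ne: "{f i A | A. A \<subseteq> Opt \<and> card A \<le> k} \<noteq> {}" by auto
    have "Max {f i A | A. A \<subseteq> Opt \<and> card A \<le> k} \<in> {f i A | A. A \<subseteq> Opt \<and> card A \<le> k}"
      using Max_in[OF fin ne] .
    then have "\<exists>A. A \<subseteq> Opt \<and> card A \<le> k \<and> f i A = Max {f i A | A. A \<subseteq> Opt \<and> card A \<le> k}" by auto
    then show ?thesis unfolding Oi_def by (rule someI_ex)
  qed
  have OPT: "(\<Sum>i<m. f i (Oi i)) = Fobj f m k Opt"
    unfolding Fobj_def using Oi by simp
  have "(\<forall>S \<in> set_pmf (sampling_greedy f m k l selM ch ord). S \<subseteq> \<Omega> \<and> card S \<le> l) \<and>
         measure_pmf.expectation (sampling_greedy f m k l selM ch ord) (Fobj f m k)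
           \<ge> 1 / (2 * exp 1) * (\<Sum>i<m. f i (Oi i))"
    by (rule main_ctx[OF assms(1-11), of Oi]) (use Oi in auto)
  then show ?thesis unfolding OPT .
qed

end
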